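(* Let $H\in\mathbb{R}^{n\times d}$ have rank $h$, let $\Sigma\in\mathbb{R}^{n\times n}$ be symmetric positive definite, let $y\in\mathbb{R}^n$, $J\ge2$, and let $v_0^{(1)},\dots,v_0^{(J)}\in\mathbb{R}^d$ be an initial ensemble. Run deterministic EKI: $$v_{i+1}^{(j)}=v_i^{(j)}+\Gamma_iH^\top(H\Gamma_iH^\top+\Sigma)^{-1}(y-Hv_i^{(j)}),$$ where $\Gamma_i$ is the empirical covariance of the ensemble at step $i$. Let $v^*=(H^\top\Sigma^{-1}H)^\dagger H^\top\Sigma^{-1}y$ and $\omega_i^{(j)}=v_i^{(j)}-v^*$, and let $\mathbb{P},\mathbb{Q},\mathbb{N}$ be the projectors defined in the context. Then for every particle $j=1,\dots,J$: (a) $\|\mathbb{P}\omega_i^{(j)}\|=\mathcal{O}(i^{-1/2})$ as $i\to\infty$; (b) $\mathbb{Q}\omega_i^{(j)}=\mathbb{Q}\omega_0^{(j)}$ for all $i\ge0$; (c) $\mathbb{N}\omega_i^{(j)}=\mathbb{N}\omega_0^{(j)}$ for all $i\ge0$.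
   Context: $\dagger$ is the Moore–Penrose pseudoinverse; $H^+:=(H^\top\Sigma^{-1}H)^\dagger H^\top\Sigma^{-1}$. Empirical covariance: $\Gamma_i=\frac{1}{J-1}\sum_{j}(v_i^{(j)}-\bar v_i)(v_i^{(j)}-\bar v_i)^\top$, $\bar v_i=\frac1J\sum_jv_i^{(j)}$. Let $r$ be the number of positive eigenvalues of the pencil $H\Gamma_0H^\top w=\delta\Sigma w$. Let $w_1,\dots,w_n$ be a basis of $\mathbb{R}^n$ with $w_k^\top\Sigma w_l$ equal to $1$ if $k=l$ and $0$ otherwise, such that each $w_\ell$ is a generalized eigenvector of $(H\Gamma_iH^\top,\Sigma)$ for every $i\ge0$ (with eigenvalue $\delta_{\ell,i}$); $w_1,\dots,w_r\in\mathsf{Ran}(\Sigma^{-1}H)$ correspond to positive eigenvalues; $w_{r+1},\dots,w_h\in\mathsf{Ran}(\Sigma^{-1}H)$ correspond to eigenvalue zero; $w_{h+1},\dots,w_n$ form a basis of $\mathsf{Ker}(H^\top)$. Define $u_\ell=\frac{1}{\delta_{\ell,0}}\Gamma_0H^\top w_\ell$ for $\ell\le r$ and $u_\ell=H^+\Sigma w_\ell$ for $r<\ell\le h$; let $U=[u_1,\dots,u_h]$, $U_{k:l}$ its columns $k$ through $l$. Define $\mathbb{P}=U_{1:r}U_{1:r}^\top H^\top\Sigma^{-1}H$, $\mathbb{Q}=U_{r+1:h}U_{r+1:h}^\top H^\top\Sigma^{-1}H$, $\mathbb{N}=I-\mathbb{P}-\mathbb{Q}$. *)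

theory Defs
  imports "HOL-Analysis.Analysis" "HOL-Library.Landau_Symbols"
begin

definition outer :: "real^'m \<Rightarrow> real^'k \<Rightarrow> real^'k^'m" where
  "outer x z = (\<chi> a b. x $ a * z $ b)"

definition pinv :: "real^'k^'m \<Rightarrow> real^'m^'k" where
  "pinv A = (THE X. A ** X ** A = A \<and> X ** A ** X = X \<and>
                    transpose (A ** X) = A ** X \<and> transpose (X ** A) = X ** A)"

definition sym_posdef :: "real^'n^'n \<Rightarrow> bool" where
  "sym_posdef S \<longleftrightarrow> transpose S = S \<and> (\<forall>x. x \<noteq> 0 \<longrightarrow> x \<bullet> (S *v x) > 0)"

definition ens_mean :: "nat \<Rightarrow> (nat \<Rightarrow> real^'d) \<Rightarrow> real^'d" where
  "ens_mean J v = (1 / real J) *\<^sub>R (\<Sum>j\<in>{1..J}. v j)"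

definition emp_cov :: "nat \<Rightarrow> (nat \<Rightarrow> real^'d) \<Rightarrow> real^'d^'d" where
  "emp_cov J v = (1 / (real J - 1)) *\<^sub>R
     (\<Sum>j\<in>{1..J}. outer (v j - ens_mean J v) (v j - ens_mean J v))"

definition Hplus :: "real^'d^'n \<Rightarrow> real^'n^'n \<Rightarrow> real^'n^'d" where
  "Hplus H S = pinv (transpose H ** matrix_inv S ** H) ** transpose H ** matrix_inv S"

end

theory Submission
  imports Defs
begin

lemma tdot: "(transpose A *v x) \<bullet> y = x \<bullet> ((A::real^'a^'b) *v y)"
  by (simp add: dot_lmul_matrix)

lemma symdot: "transpose S = S \<Longrightarrow> (S *v x) \<bullet> y = x \<bullet> ((S::real^'a^'a) *v y)"
  by (metis tdot)

lemma outer_mv: "outer a b *v x = (b \<bullet> x) *\<^sub>R a"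
  by (simp add: outer_def matrix_vector_mult_def vec_eq_iff inner_vec_def sum_distrib_left mult.commute mult.left_commute)

lemma sum_mv: "(\<Sum>l\<in>S. f l) *v (x::real^'a) = (\<Sum>l\<in>S. f l *v x)"
  by (induction S rule: infinite_finite_induct) (auto simp: matrix_vector_mult_add_rdistrib)

lemma scale_mv: "(c *\<^sub>R A) *v (x::real^'a) = c *\<^sub>R (A *v x)"
  by (simp add: vec_eq_iff matrix_vector_mult_def sum_distrib_left mult.assoc)

lemma diff_mv: "(A - B) *v (x::real^'a) = A *v x - B *v x"
  by (simp add: vec_eq_iff matrix_vector_mult_def sum_subtractf left_diff_distrib)

lemma mv_sum: "(A::real^'a^'b) *v (\<Sum>l\<in>S. f l) = (\<Sum>l\<in>S. A *v f l)"
  by (rule linear_sum[OF matrix_vector_mul_linear])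

lemma mv_scale: "A *v (c *\<^sub>R x) = c *\<^sub>R (A *v (x::real^'a))"
  by (rule linear_scale[OF matrix_vector_mul_linear])

lemma mv_diff: "A *v (x - y) = A *v x - A *v (y::real^'a)"
  by (rule linear_diff[OF matrix_vector_mul_linear])

lemma mv_add: "A *v (x + y) = A *v x + A *v (y::real^'a)"
  by (rule linear_add[OF matrix_vector_mul_linear])

lemma inv_props:
  fixes S :: "real^'n^'n"
  assumes "invertible S"
  shows "S ** matrix_inv S = mat 1" "matrix_inv S ** S = mat 1"
proof -
  have "\<exists>A'. S ** A' = mat 1 \<and> A' ** S = mat 1" using assms invertible_def by blast
  then have "S ** matrix_inv S = mat 1 \<and> matrix_inv S ** S = mat 1"
    unfolding matrix_inv_def by (rule someI_ex)
  then show "S ** matrix_inv S = mat 1" "matrix_inv S ** S = mat 1" by auto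
qed

lemma inv_mv:
  fixes S :: "real^'n^'n"
  assumes "invertible S"
  shows "S *v (matrix_inv S *v x) = x" "matrix_inv S *v (S *v x) = x"
  using inv_props[OF assms] by (simp_all add: matrix_vector_mul_assoc)

lemma inj_invertible:
  fixes S :: "real^'n^'n"
  assumes "\<And>x. S *v x = 0 \<Longrightarrow> x = 0"
  shows "invertible S"
  using assms matrix_left_invertible_ker invertible_left_inverse by blast

lemma posdef_invertible:
  fixes S :: "real^'n^'n"
  assumes "\<And>x. x \<noteq> 0 \<Longrightarrow> x \<bullet> (S *v x) > 0"
  shows "invertible S"
  by (rule inj_invertible) (metis assms inner_zero_right less_irrefl)

lemma inv_sym:
  fixes S :: "real^'n^'n"
  assumes "invertible S" "transpose S = S"
  shows "transpose (matrix_inv S) = matrix_inv S"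
proof -
  have "transpose (matrix_inv S) = transpose (matrix_inv S) ** (S ** matrix_inv S)"
    using inv_props[OF assms(1)] by simp
  also have "\<dots> = (transpose (matrix_inv S) ** transpose S) ** matrix_inv S"
    by (simp add: assms(2) matrix_mul_assoc)
  also have "\<dots> = transpose (S ** matrix_inv S) ** matrix_inv S"
    by (simp add: matrix_transpose_mul)
  also have "\<dots> = matrix_inv S" using inv_props[OF assms(1)] by simp
  finally show ?thesis .
qed

definition pen :: "real^'k^'m \<Rightarrow> real^'m^'k \<Rightarrow> bool" where
  "pen A X \<longleftrightarrow> A ** X ** A = A \<and> X ** A ** X = X \<and>
                    transpose (A ** X) = A ** X \<and> transpose (X ** A) = X ** A"

lemma pen_unique:
  assumes "pen A X" "pen A Y" shows "X = Y"
proof -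
  have X1: "A ** X ** A = A" and X2: "X ** A ** X = X" and X3: "transpose (A ** X) = A ** X"
    and X4: "transpose (X ** A) = X ** A" using assms(1) unfolding pen_def by auto
  have Y1: "A ** Y ** A = A" and Y2: "Y ** A ** Y = Y" and Y3: "transpose (A ** Y) = A ** Y"
    and Y4: "transpose (Y ** A) = Y ** A" using assms(2) unfolding pen_def by auto
  have "transpose A = transpose ((A ** Y) ** A)" using Y1 by simp
  also have "\<dots> = transpose A ** transpose (A ** Y)" by (rule matrix_transpose_mul)
  finally have tA1: "transpose A = transpose A ** (A ** Y)" using Y3 by simp
  have "transpose A = transpose (A ** (X ** A))" using X1 by (simp add: matrix_mul_assoc)
  also have "\<dots> = transpose (X ** A) ** transpose A" by (rule matrix_transpose_mul)
  finally have tA2: "transpose A = (X ** A) ** transpose A" using X4 by simp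
  have "X = X ** (A ** X)" using X2 by (simp add: matrix_mul_assoc)
  also have "\<dots> = X ** (transpose X ** transpose A)" by (subst X3[symmetric]) (simp add: matrix_transpose_mul)
  also have "\<dots> = X ** (transpose X ** (transpose A ** (A ** Y)))" using tA1 by simp
  also have "\<dots> = X ** (transpose (A ** X)) ** A ** Y" by (simp add: matrix_transpose_mul matrix_mul_assoc)
  also have "\<dots> = (X ** A ** X) ** A ** Y" by (simp add: X3 matrix_mul_assoc)
  also have "\<dots> = X ** A ** Y" using X2 by simp
  finally have eX: "X = X ** A ** Y" .
  have "Y = (Y ** A) ** Y" using Y2 by simp
  also have "\<dots> = (transpose A ** transpose Y) ** Y" by (subst Y4[symmetric]) (simp add: matrix_transpose_mul)
  also have "\<dots> = (((X ** A) ** transpose A) ** transpose Y) ** Y" using tA2 by simp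
  also have "\<dots> = X ** A ** transpose (Y ** A) ** Y" by (simp add: matrix_transpose_mul matrix_mul_assoc)
  also have "\<dots> = X ** A ** (Y ** A ** Y)" by (simp add: Y4 matrix_mul_assoc)
  also have "\<dots> = X ** A ** Y" using Y2 by simp
  finally show ?thesis using eX by simp
qed

lemma pen_exists_sym:
  fixes A :: "real^'k^'k"
  assumes symA: "transpose A = A"
  shows "\<exists>X. pen A X"
proof -
  let ?R = "range (\<lambda>x. A *v x)"
  have subR: "subspace ?R"
  proof -
    have "0 \<in> ?R" by (metis matrix_vector_mult_0_right rangeI)
    moreover have "x + y \<in> ?R" if hx: "x \<in> ?R" and hy: "y \<in> ?R" for x y
    proof -
      obtain a b where "x = A *v a" "y = A *v b" using hx hy by blast
      then have "x + y = A *v (a + b)" by (simp add: mv_add)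
      then show ?thesis by blast
    qed
    moreover have "c *\<^sub>R x \<in> ?R" if hx: "x \<in> ?R" for c x
    proof -
      obtain a where "x = A *v a" using hx by blast
      then have "c *\<^sub>R x = A *v (c *\<^sub>R a)" by (simp add: mv_scale)
      then show ?thesis by blast
    qed
    ultimately show ?thesis unfolding subspace_def by blast
  qed
  obtain B where BR: "B \<subseteq> ?R" and orth: "pairwise orthogonal B"
    and nB: "\<And>x. x \<in> B \<Longrightarrow> norm x = 1" and indB: "independent B" and cB: "card B = dim ?R" and spB: "span B = ?R"
    by (rule orthonormal_basis_subspace[OF subR]) blast
  have finB: "finite B" using indB independent_imp_finite by blast
  define P where "P = (\<Sum>b\<in>B. outer b b)"
  have Pv: "P *v x = (\<Sum>b\<in>B. (b \<bullet> x) *\<^sub>R b)" for x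
    unfolding P_def sum_mv outer_mv ..
  have bb: "b \<bullet> b = 1" if "b \<in> B" for b
    using nB[OF that] by (simp add: dot_square_norm)
  have Pb: "P *v b = b" if "b \<in> B" for b
  proof -
    have "P *v b = (\<Sum>c\<in>B. if c = b then b else 0)"
      unfolding Pv
      by (rule sum.cong) (use orth that bb in \<open>auto simp: pairwise_def orthogonal_def inner_commute\<close>)
    then show ?thesis using that finB by simp
  qed
  have PR: "P *v x = x" if "x \<in> ?R" for x
  proof -
    have "x \<in> span B" using that spB by simp
    then show ?thesis
    proof (induction rule: span_induct_alt)
      case base then show ?case by simp
    next
      case (step c b y) then show ?case using Pb by (simp add: mv_add mv_scale)
    qed
  qed
  have PinR: "P *v x \<in> ?R" for x
  proof -
    have "P *v x \<in> span B" unfolding Pv by (intro span_sum span_scale span_base)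
    then show ?thesis using spB by simp
  qed
  have orthz: "y \<bullet> (x - P *v x) = 0" if "y \<in> ?R" for x y
  proof -
    have "b \<bullet> (x - P *v x) = 0" if "b \<in> B" for b
    proof -
      have "b \<bullet> (P *v x) = (\<Sum>c\<in>B. (c \<bullet> x) * (b \<bullet> c))"
        unfolding Pv inner_sum_right by simp
      also have "\<dots> = (\<Sum>c\<in>B. if c = b then b \<bullet> x else 0)"
        by (rule sum.cong) (use orth that bb in \<open>auto simp: pairwise_def orthogonal_def inner_commute\<close>)
      finally show ?thesis using that finB by (simp add: inner_diff_right)
    qed
    then have "orthogonal (x - P *v x) y"
      using orthogonal_to_span[of y B "x - P *v x"] spB that
      by (simp add: orthogonal_def inner_commute)
    then show ?thesis by (simp add: orthogonal_def inner_commute)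
  qed
  have AP: "A *v (P *v x) = A *v x" for x
  proof -
    let ?z = "x - P *v x"
    have "(A *v ?z) \<bullet> (A *v ?z) = ?z \<bullet> (A *v (A *v ?z))"
      using symdot[OF symA] by simp
    also have "\<dots> = 0" using orthz[OF rangeI, of "A *v ?z" x] by (simp add: inner_commute)
    finally have "A *v ?z = 0" by simp
    then show ?thesis by (simp add: mv_diff)
  qed
  have PP: "P *v (P *v x) = P *v x" for x using PR PinR by blast
  have PA: "P *v (A *v x) = A *v x" for x using PR by blast
  have symP: "transpose P = P"
    unfolding P_def
    by (simp add: vec_eq_iff transpose_def outer_def sum_component mult.commute)
  define B' where "B' = A + mat 1 - P"
  have B'v: "B' *v x = A *v x + x - P *v x" for x
    unfolding B'_def by (simp add: diff_mv matrix_vector_mult_add_rdistrib)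
  have invB: "invertible B'"
  proof (rule inj_invertible)
    fix x assume "B' *v x = 0"
    then have e: "A *v x = - (x - P *v x)" unfolding B'v by (simp add: algebra_simps)
    have "(A *v x) \<bullet> (A *v x) = - ((A *v x) \<bullet> (x - P *v x))" by (subst (2) e) (simp add: inner_diff_right)
    also have "\<dots> = 0" using orthz by simp
    finally have Ax: "A *v x = 0" by simp
    then have xP: "x = P *v x" using e by simp
    obtain t where t: "P *v x = A *v t" using PinR by blast
    have "x \<bullet> x = (A *v t) \<bullet> x" using xP t by simp
    also have "\<dots> = t \<bullet> (A *v x)" using symdot[OF symA] by simp
    finally show "x = 0" using Ax by simp
  qed
  define Bi where "Bi = matrix_inv B'"
  have BiB: "Bi ** B' = mat 1" "B' ** Bi = mat 1" using inv_props[OF invB] Bi_def by auto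
  have mAP: "A ** P = A" using AP by (simp add: matrix_eq matrix_vector_mul_assoc[symmetric])
  have mPA: "P ** A = A" using PA by (simp add: matrix_eq matrix_vector_mul_assoc[symmetric])
  have mPP: "P ** P = P" using PP by (simp add: matrix_eq matrix_vector_mul_assoc[symmetric])
  have B'P: "B' ** P = A" using AP PP
    by (simp add: matrix_eq matrix_vector_mul_assoc[symmetric] B'v)
  have PB': "P ** B' = A" using PA PP
    by (simp add: matrix_eq matrix_vector_mul_assoc[symmetric] B'v mv_add mv_diff AP)
  have comm: "Bi ** P = P ** Bi"
  proof -
    have "Bi ** P = Bi ** P ** (B' ** Bi)" using BiB by simp
    also have "\<dots> = Bi ** (P ** B') ** Bi" by (simp add: matrix_mul_assoc)
    also have "\<dots> = Bi ** (B' ** P) ** Bi" by (simp add: B'P PB')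
    also have "\<dots> = (Bi ** B') ** P ** Bi" by (simp add: matrix_mul_assoc)
    finally show ?thesis using BiB by simp
  qed
  define X where "X = Bi ** P"
  have AX: "A ** X = P"
  proof -
    have "A ** X = (P ** (B' ** Bi)) ** P" unfolding X_def PB'[symmetric] by (simp add: matrix_mul_assoc)
    then show ?thesis using BiB mPP by simp
  qed
  have XA: "X ** A = P"
  proof -
    have "X ** A = Bi ** (P ** A)" unfolding X_def by (simp add: matrix_mul_assoc)
    also have "\<dots> = Bi ** (B' ** P)" by (simp add: mPA B'P)
    also have "\<dots> = (Bi ** B') ** P" by (simp add: matrix_mul_assoc)
    finally show ?thesis using BiB by simp
  qed
  have "pen A X"
    unfolding pen_def
  proof (intro conjI)
    show "A ** X ** A = A" using AX mPA by simp
    have "P ** X = (P ** Bi) ** P" unfolding X_def by (simp add: matrix_mul_assoc)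
    also have "\<dots> = Bi ** (P ** P)" by (simp add: comm[symmetric] matrix_mul_assoc)
    finally show "X ** A ** X = X" using XA mPP X_def by simp
    show "transpose (A ** X) = A ** X" using AX symP by simp
    show "transpose (X ** A) = X ** A" using XA symP by simp
  qed
  then show ?thesis by blast
qed

lemma pinv_sym:
  fixes A :: "real^'k^'k"
  assumes "transpose A = A"
  shows "A ** pinv A ** A = A"
proof -
  have "\<exists>!X. pen A X" using pen_exists_sym[OF assms] pen_unique by blast
  then have "pen A (pinv A)" unfolding pinv_def pen_def[symmetric] by (rule theI')
  then show ?thesis unfolding pen_def by blast
qed

lemma basis_exp:
  fixes S :: "real^'n^'n" and w :: "nat \<Rightarrow> real^'n"
  assumes symS: "transpose S = S"
    and orth: "\<And>k l. k \<in> {1..CARD('n)} \<Longrightarrow> l \<in> {1..CARD('n)} \<Longrightarrow>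
       w k \<bullet> (S *v w l) = (if k = l then 1 else 0)"
  shows "x = (\<Sum>l\<in>{1..CARD('n)}. ((S *v w l) \<bullet> x) *\<^sub>R w l)"
proof -
  let ?N = "{1..CARD('n)}"
  let ?W = "w ` ?N"
  have inj: "inj_on w ?N"
  proof (rule inj_onI)
    fix k l assume k: "k \<in> ?N" and l: "l \<in> ?N" and e: "w k = w l"
    show "k = l"
    proof (rule ccontr)
      assume "k \<noteq> l"
      then have "w k \<bullet> (S *v w l) = 0" using orth[OF k l] by simp
      moreover have "w k \<bullet> (S *v w k) = 1" using orth[OF k k] by simp
      ultimately show False using e by simp
    qed
  qed
  have finW: "finite ?W" by simp
  have cardW: "card ?W = CARD('n)" using card_image[OF inj] by simp
  have ind: "independent ?W"
  proof (rule independent_if_scalars_zero[OF finW])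
    fix f z assume s: "(\<Sum>x\<in>?W. f x *\<^sub>R x) = 0" and z: "z \<in> ?W"
    then obtain k where k: "k \<in> ?N" and zk: "z = w k" by blast
    have "0 = w k \<bullet> (S *v (\<Sum>x\<in>?W. f x *\<^sub>R x))" using s by simp
    also have "\<dots> = (\<Sum>l\<in>?N. f (w l) * (w k \<bullet> (S *v w l)))"
      unfolding sum.reindex[OF inj] o_def by (simp add: mv_sum mv_scale inner_sum_right)
    also have "\<dots> = (\<Sum>l\<in>?N. if l = k then f (w k) else 0)"
      by (rule sum.cong) (use orth k in auto)
    also have "\<dots> = f (w k)" using k by simp
    finally show "f z = 0" using zk by simp
  qed
  have "UNIV \<subseteq> span ?W"
    using card_eq_dim[of ?W UNIV] ind cardW finW by (simp add: dim_UNIV)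
  then have "x \<in> span ?W" by blast
  then obtain c where c: "x = (\<Sum>y\<in>?W. c y *\<^sub>R y)" using span_finite[OF finW] by blast
  then have c2: "x = (\<Sum>l\<in>?N. c (w l) *\<^sub>R w l)" unfolding sum.reindex[OF inj] o_def .
  have coef: "(S *v w k) \<bullet> x = c (w k)" if k: "k \<in> ?N" for k
  proof -
    have "(S *v w k) \<bullet> x = (\<Sum>l\<in>?N. c (w l) * (w k \<bullet> (S *v w l)))"
      by (subst c2) (simp add: inner_sum_right symdot[OF symS])
    also have "\<dots> = (\<Sum>l\<in>?N. if l = k then c (w k) else 0)"
      by (rule sum.cong) (use orth k in auto)
    finally show ?thesis using k by simp
  qed
  show ?thesis by (subst c2) (rule sum.cong, auto simp: coef)
qed

lemma seq_bound:
  fixes p :: "nat \<Rightarrow> real" and a :: real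
  assumes a: "a > 0" and p0: "p 0 = 1" and ps: "\<And>i. p (Suc i) = p i / (1 + a * (p i)\<^sup>2)"
  shows "p i > 0 \<and> (p i)\<^sup>2 * (1 + 2 * a * real i) \<le> 1"
proof (induction i)
  case 0 then show ?case using p0 by simp
next
  case (Suc i)
  let ?q = "p i" let ?d = "1 + a * ?q\<^sup>2"
  have q: "?q > 0" and qb: "?q\<^sup>2 * (1 + 2 * a * real i) \<le> 1" using Suc by auto
  have d: "?d \<ge> 1" using a by simp
  have pos: "p (Suc i) > 0" using q d ps by simp
  have "(p (Suc i))\<^sup>2 * (1 + 2 * a * real (Suc i)) = ?q\<^sup>2 * (1 + 2 * a * real i + 2 * a) / ?d\<^sup>2"
    by (simp add: ps power_divide algebra_simps)
  also have "\<dots> \<le> 1"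
  proof -
    have "?q\<^sup>2 * (1 + 2 * a * real i + 2 * a) = ?q\<^sup>2 * (1 + 2 * a * real i) + 2 * a * ?q\<^sup>2"
      by (simp add: algebra_simps)
    also have "\<dots> \<le> 1 + 2 * a * ?q\<^sup>2" using qb by simp
    also have "\<dots> \<le> ?d\<^sup>2"
    proof -
      have "?d\<^sup>2 = 1 + 2 * a * ?q\<^sup>2 + (a * ?q\<^sup>2)\<^sup>2" by (simp add: power2_eq_square algebra_simps)
      moreover have "(a * ?q\<^sup>2)\<^sup>2 \<ge> 0" by simp
      ultimately show ?thesis by linarith
    qed
    finally show ?thesis using d by simp
  qed
  finally show ?case using pos by simp
qed

declare transpose_matrix_vector[simp del]

lemma emp_cov_mv:
  "emp_cov J v *v x = (1 / (real J - 1)) *\<^sub>R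
     (\<Sum>j\<in>{1..J}. ((v j - ens_mean J v) \<bullet> x) *\<^sub>R (v j - ens_mean J v))"
  unfolding emp_cov_def scale_mv sum_mv outer_mv ..

lemma emp_cov_dot:
  "(emp_cov J v *v x) \<bullet> y = x \<bullet> (emp_cov J v *v y)"
  unfolding emp_cov_mv
  by (simp add: inner_sum_left inner_sum_right mult.commute inner_commute)

lemma emp_cov_quad:
  "x \<bullet> (emp_cov J v *v x) = (1 / (real J - 1)) * (\<Sum>j\<in>{1..J}. ((v j - ens_mean J v) \<bullet> x)\<^sup>2)"
  unfolding emp_cov_mv
  by (simp add: inner_sum_right power2_eq_square inner_commute)

lemma emp_cov_psd:
  assumes "J \<ge> 2"
  shows "x \<bullet> (emp_cov J v *v x) \<ge> 0"
  using assms unfolding emp_cov_quad by (intro mult_nonneg_nonneg sum_nonneg) auto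

lemma emp_cov_zero:
  assumes "J \<ge> 2" and "x \<bullet> (emp_cov J v *v x) = 0"
  shows "emp_cov J v *v x = 0"
proof -
  have "(\<Sum>j\<in>{1..J}. ((v j - ens_mean J v) \<bullet> x)\<^sup>2) = 0"
    using assms unfolding emp_cov_quad by simp
  then have "\<forall>j\<in>{1..J}. ((v j - ens_mean J v) \<bullet> x)\<^sup>2 = 0"
    by (subst (asm) sum_nonneg_eq_0_iff) auto
  then show ?thesis unfolding emp_cov_mv by simp
qed

lemma emp_cov_sym: "transpose (emp_cov J v) = emp_cov J v"
  unfolding emp_cov_def
  by (simp add: vec_eq_iff transpose_def outer_def sum_component mult.commute)

lemma transpose_add: "transpose (A + B) = transpose A + transpose (B::real^'a^'b)"
  by (simp add: vec_eq_iff transpose_def)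

theorem theorem3p16:
  fixes H :: "real^'d^'n" and \<Sigma> :: "real^'n^'n" and y :: "real^'n"
    and J :: nat and v :: "nat \<Rightarrow> nat \<Rightarrow> real^'d"
    and h r :: nat and w :: "nat \<Rightarrow> real^'n" and u :: "nat \<Rightarrow> real^'d" and \<delta> :: "nat \<Rightarrow> nat \<Rightarrow> real"
  assumes rankH: "rank H = h"
    and Sigma: "sym_posdef \<Sigma>"
    and J2: "J \<ge> 2"
    and EKI: "\<And>i j. j \<in> {1..J} \<Longrightarrow>
       v (Suc i) j = v i j + (emp_cov J (v i) ** transpose H **
          matrix_inv (H ** emp_cov J (v i) ** transpose H + \<Sigma>)) *v (y - H *v v i j)"
    \<comment> \<open>the Sigma-orthonormal simultaneous generalized eigenbasis w_1..w_n\<close>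
    and orth: "\<And>k l. k \<in> {1..CARD('n)} \<Longrightarrow> l \<in> {1..CARD('n)} \<Longrightarrow>
       w k \<bullet> (\<Sigma> *v w l) = (if k = l then 1 else 0)"
    and eig: "\<And>l i. l \<in> {1..CARD('n)} \<Longrightarrow>
       (H ** emp_cov J (v i) ** transpose H) *v w l = \<delta> l i *\<^sub>R (\<Sigma> *v w l)"
    and rh: "r \<le> h"
    and pos: "\<And>l. l \<in> {1..r} \<Longrightarrow>
       w l \<in> range (\<lambda>x. matrix_inv \<Sigma> *v (H *v x)) \<and> \<delta> l 0 > 0"
    and zero: "\<And>l. l \<in> {r+1..h} \<Longrightarrow>
       w l \<in> range (\<lambda>x. matrix_inv \<Sigma> *v (H *v x)) \<and> \<delta> l 0 = 0"
    and ker: "span (w ` {h+1..CARD('n)}) = {x. transpose H *v x = 0}"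
    and kerin: "\<And>l. l \<in> {h+1..CARD('n)} \<Longrightarrow> transpose H *v w l = 0"
    and u_def: "\<And>l. u l = (if l \<le> r
                 then (1 / \<delta> l 0) *\<^sub>R ((emp_cov J (v 0) ** transpose H) *v w l)
                 else Hplus H \<Sigma> *v (\<Sigma> *v w l))"
    and rpos: "r = card {l \<in> {1..CARD('n)}. \<delta> l 0 > 0}"
  defines "P \<equiv> (\<Sum>l\<in>{1..r}. outer (u l) (u l)) ** (transpose H ** matrix_inv \<Sigma> ** H)"
    and "Q \<equiv> (\<Sum>l\<in>{r+1..h}. outer (u l) (u l)) ** (transpose H ** matrix_inv \<Sigma> ** H)"
    and "vstar \<equiv> pinv (transpose H ** matrix_inv \<Sigma> ** H) *v (transpose H *v (matrix_inv \<Sigma> *v y))"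
  shows "\<forall>j\<in>{1..J}.
           (\<lambda>i. norm (P *v (v i j - vstar))) \<in> O(\<lambda>i. 1 / sqrt (real i)) \<and>
           (\<forall>i. Q *v (v i j - vstar) = Q *v (v 0 j - vstar)) \<and>
           (\<forall>i. (mat 1 - P - Q) *v (v i j - vstar) = (mat 1 - P - Q) *v (v 0 j - vstar))"
proof -
  let ?N = "{1..CARD('n)}"
  define Si where "Si = matrix_inv \<Sigma>"
  have symS: "transpose \<Sigma> = \<Sigma>" using Sigma sym_posdef_def by blast
  have invS: "invertible \<Sigma>" using Sigma unfolding sym_posdef_def by (intro posdef_invertible) auto
  have SSi: "\<Sigma> *v (Si *v x) = x" "Si *v (\<Sigma> *v x) = x" for x using inv_mv[OF invS] Si_def by auto
  have symSi: "transpose Si = Si" using inv_sym[OF invS symS] Si_def by simp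
  have hn: "h \<le> CARD('n)" using rank_bound[of H] rankH by simp
  have J0: "real J - 1 > 0" using J2 by simp
  have Nsplit: "?N = {1..h} \<union> {h+1..CARD('n)}" "{1..h} \<inter> {h+1..CARD('n)} = {}" using hn by auto
  have hsplit: "{1..h} = {1..r} \<union> {r+1..h}" "{1..r} \<inter> {r+1..h} = {}" using rh by auto
  have hN: "l \<in> {1..h} \<Longrightarrow> l \<in> ?N" for l using hn by auto
  have rN: "l \<in> {1..r} \<Longrightarrow> l \<in> ?N" for l using hn rh by auto
  have zN: "l \<in> {r+1..h} \<Longrightarrow> l \<in> ?N" for l using hn rh by auto
  define G where "G i = emp_cov J (v i)" for i
  define a where "a l = transpose H *v w l" for l
  have wH: "w l \<bullet> (H *v x) = a l \<bullet> x" for l x unfolding a_def by (simp add: tdot)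
  have Hdot: "u \<bullet> (transpose H *v z) = (H *v u) \<bullet> z" for u z by (metis tdot inner_commute)
  define K where "K i = H ** G i ** transpose H" for i
  have Kv: "K i *v x = H *v (G i *v (transpose H *v x))" for i x
    by (simp add: K_def matrix_vector_mul_assoc matrix_mul_assoc)
  have Gdot: "(G i *v x) \<bullet> y = x \<bullet> (G i *v y)" for i x y unfolding G_def by (rule emp_cov_dot)
  have Gpsd: "x \<bullet> (G i *v x) \<ge> 0" for i x unfolding G_def using emp_cov_psd[OF J2] .
  have Kpsd: "x \<bullet> (K i *v x) \<ge> 0" for i x
    unfolding Kv by (metis Gpsd tdot inner_commute)
  have eig': "K i *v w l = \<delta> l i *\<^sub>R (\<Sigma> *v w l)" if "l \<in> ?N" for l i
    using eig[OF that] K_def G_def by simp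
  have HGa: "H *v (G i *v a l) = \<delta> l i *\<^sub>R (\<Sigma> *v w l)" if "l \<in> ?N" for l i
    using eig'[OF that] Kv a_def by simp
  have del: "\<delta> l i = a l \<bullet> (G i *v a l)" if "l \<in> ?N" for l i
  proof -
    have "w l \<bullet> (K i *v w l) = \<delta> l i" using eig'[OF that] orth[OF that that] by (simp add: mv_scale)
    then show ?thesis unfolding Kv a_def by (metis Hdot inner_commute)
  qed
  have delnn: "\<delta> l i \<ge> 0" if "l \<in> ?N" for l i using del[OF that] Gpsd by simp
  have ak: "a l = 0" if "l \<in> {h+1..CARD('n)}" for l using kerin[OF that] a_def by simp
  define M where "M i = K i + \<Sigma>" for i
  have Mv: "M i *v x = K i *v x + \<Sigma> *v x" for i x by (simp add: M_def matrix_vector_mult_add_rdistrib)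
  have invM: "invertible (M i)" for i
  proof (rule posdef_invertible)
    fix x :: "real^'n" assume "x \<noteq> 0"
    then have "x \<bullet> (\<Sigma> *v x) > 0" using Sigma sym_posdef_def by blast
    then show "x \<bullet> (M i *v x) > 0" using Kpsd[of x i] by (simp add: Mv inner_add_right)
  qed
  have symG: "transpose (G i) = G i" for i unfolding G_def by (rule emp_cov_sym)
  have symM: "transpose (M i) = M i" for i
    unfolding M_def K_def by (simp add: transpose_add symS matrix_transpose_mul symG matrix_mul_assoc)
  define Mi where "Mi i = matrix_inv (M i)" for i
  have MMi: "M i *v (Mi i *v x) = x" "Mi i *v (M i *v x) = x" for i x using inv_mv[OF invM] Mi_def by auto
  have Midot: "(Mi i *v x) \<bullet> y = x \<bullet> (Mi i *v y)" for i x y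
    using symdot[OF inv_sym[OF invM symM]] Mi_def by simp
  have MiS: "Mi i *v (\<Sigma> *v w l) = (1 / (1 + \<delta> l i)) *\<^sub>R w l" if "l \<in> ?N" for l i
  proof -
    have "M i *v w l = (1 + \<delta> l i) *\<^sub>R (\<Sigma> *v w l)" using eig'[OF that] by (simp add: Mv algebra_simps)
    then have e: "w l = (1 + \<delta> l i) *\<^sub>R (Mi i *v (\<Sigma> *v w l))" by (metis MMi(2) mv_scale)
    have nz: "1 + \<delta> l i \<noteq> 0" using delnn[OF that, of i] by simp
    have "(1 / (1 + \<delta> l i)) *\<^sub>R w l = (1 / (1 + \<delta> l i)) *\<^sub>R ((1 + \<delta> l i) *\<^sub>R (Mi i *v (\<Sigma> *v w l)))"
      using e by (rule arg_cong)
    then show ?thesis using nz by simp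
  qed
  define A where "A = transpose H ** Si ** H"
  have Av: "A *v x = transpose H *v (Si *v (H *v x))" for x
    by (simp add: A_def matrix_vector_mul_assoc matrix_mul_assoc)
  have symA: "transpose A = A"
    unfolding A_def by (simp add: matrix_transpose_mul symSi matrix_mul_assoc)
  have wrange: "\<exists>x. w l = Si *v (H *v x)" if "l \<in> {1..h}" for l
  proof -
    have "l \<in> {1..r} \<or> l \<in> {r+1..h}" using that hsplit by auto
    then have "w l \<in> range (\<lambda>x. matrix_inv \<Sigma> *v (H *v x))" using pos zero by blast
    then show ?thesis unfolding Si_def by blast
  qed
  then obtain X where X: "\<And>l. l \<in> {1..h} \<Longrightarrow> w l = Si *v (H *v X l)" by metis
  have aX: "a l = A *v X l" if "l \<in> {1..h}" for l using X[OF that] a_def Av by simp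
  have expS: "z = (\<Sum>l\<in>?N. (w l \<bullet> z) *\<^sub>R (\<Sigma> *v w l))" for z
  proof -
    have "Si *v z = (\<Sum>l\<in>?N. ((\<Sigma> *v w l) \<bullet> (Si *v z)) *\<^sub>R w l)"
      by (rule basis_exp[OF symS orth])
    also have "\<dots> = (\<Sum>l\<in>?N. (w l \<bullet> z) *\<^sub>R w l)"
      by (simp add: symdot[OF symS] SSi)
    finally have "\<Sigma> *v (Si *v z) = \<Sigma> *v (\<Sum>l\<in>?N. (w l \<bullet> z) *\<^sub>R w l)" by simp
    then show ?thesis by (simp add: SSi mv_sum mv_scale)
  qed
  have Siexp: "Si *v z = (\<Sum>l\<in>?N. (w l \<bullet> z) *\<^sub>R w l)" for z
    by (subst expS[of z]) (simp add: mv_sum mv_scale SSi)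
  have sumN: "(\<Sum>l\<in>?N. f l) = (\<Sum>l\<in>{1..h}. f l)" if "\<And>l. l \<in> {h+1..CARD('n)} \<Longrightarrow> f l = 0"
    for f :: "nat \<Rightarrow> real^'d"
    using Nsplit that by (simp add: sum.union_disjoint)
  have HtSiy: "transpose H *v (Si *v y) = A *v (\<Sum>l\<in>{1..h}. (w l \<bullet> y) *\<^sub>R X l)"
  proof -
    have "transpose H *v (Si *v y) = (\<Sum>l\<in>?N. (w l \<bullet> y) *\<^sub>R a l)"
      by (simp add: Siexp mv_sum mv_scale a_def)
    also have "\<dots> = (\<Sum>l\<in>{1..h}. (w l \<bullet> y) *\<^sub>R a l)" by (rule sumN) (simp add: ak)
    also have "\<dots> = A *v (\<Sum>l\<in>{1..h}. (w l \<bullet> y) *\<^sub>R X l)"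
      by (simp add: mv_sum mv_scale aX)
    finally show ?thesis .
  qed
  have Avstar: "A *v vstar = transpose H *v (Si *v y)"
  proof -
    have "pinv (transpose H ** matrix_inv \<Sigma> ** H) = pinv A" unfolding A_def Si_def ..
    then have vs: "vstar = pinv A *v (transpose H *v (Si *v y))"
      unfolding vstar_def Si_def by simp
    show ?thesis unfolding vs HtSiy
      by (simp add: matrix_vector_mul_assoc matrix_mul_assoc pinv_sym[OF symA])
  qed
  define r0 where "r0 = y - H *v vstar"
  define z0 where "z0 = Si *v r0"
  have Hz0: "transpose H *v z0 = 0"
    unfolding z0_def r0_def by (simp add: mv_diff Avstar[symmetric] Av)
  have Miz0: "Mi i *v r0 = z0" for i
  proof -
    have "M i *v z0 = r0" using Hz0 by (simp add: Mv Kv z0_def SSi)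
    then show ?thesis using MMi(2) by metis
  qed
  define Lm where "Lm i = G i ** transpose H ** Mi i ** H" for i
  have Lmv: "Lm i *v x = G i *v (transpose H *v (Mi i *v (H *v x)))" for i x
    by (simp add: Lm_def matrix_vector_mul_assoc matrix_mul_assoc)
  have EKI': "v (Suc i) j = v i j - Lm i *v (v i j - vstar)" if "j \<in> {1..J}" for i j
  proof -
    have "v (Suc i) j = v i j + G i *v (transpose H *v (Mi i *v (y - H *v v i j)))"
      using EKI[OF that] by (simp add: G_def Mi_def M_def K_def matrix_vector_mul_assoc matrix_mul_assoc)
    also have "y - H *v v i j = r0 - H *v (v i j - vstar)" by (simp add: r0_def mv_diff)
    finally show ?thesis by (simp add: mv_diff Miz0 Hz0 Lmv)
  qed
  have cstep: "a l \<bullet> (x - Lm i *v x) = (a l \<bullet> x) / (1 + \<delta> l i)" if l: "l \<in> ?N" for l i x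
  proof -
    have "a l \<bullet> (Lm i *v x) = (H *v (G i *v a l)) \<bullet> (Mi i *v (H *v x))"
      unfolding Lmv by (simp add: Gdot[symmetric] Hdot inner_commute)
    also have "\<dots> = \<delta> l i * ((Mi i *v (\<Sigma> *v w l)) \<bullet> (H *v x))"
      by (simp add: HGa[OF l] Midot)
    also have "\<dots> = \<delta> l i / (1 + \<delta> l i) * (a l \<bullet> x)"
      by (simp add: MiS[OF l] wH)
    finally have "a l \<bullet> (Lm i *v x) = \<delta> l i / (1 + \<delta> l i) * (a l \<bullet> x)" .
    moreover have "1 + \<delta> l i \<noteq> 0" using delnn[OF l, of i] by simp
    ultimately show ?thesis by (simp add: inner_diff_right field_simps)
  qed
  have LGa: "Lm i *v (G i *v a l) = (\<delta> l i / (1 + \<delta> l i)) *\<^sub>R (G i *v a l)" if l: "l \<in> ?N" for l i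
    unfolding Lmv by (simp add: HGa[OF l] mv_scale MiS[OF l] a_def[symmetric])
  define e where "e i j = v i j - ens_mean J (v i)" for i j
  have Jnz: "real J \<noteq> 0" using J2 by simp
  have meanstep: "ens_mean J (v (Suc i)) = ens_mean J (v i) - Lm i *v (ens_mean J (v i) - vstar)" for i
  proof -
    have "(\<Sum>j\<in>{1..J}. v (Suc i) j) = (\<Sum>j\<in>{1..J}. v i j - Lm i *v (v i j - vstar))"
      by (rule sum.cong) (auto simp: EKI')
    also have "\<dots> = (\<Sum>j\<in>{1..J}. v i j) - Lm i *v ((\<Sum>j\<in>{1..J}. v i j) - real J *\<^sub>R vstar)"
      by (simp add: sum_subtractf mv_sum[symmetric] scaleR_conv_of_real)
    finally have s: "(\<Sum>j\<in>{1..J}. v (Suc i) j) = (\<Sum>j\<in>{1..J}. v i j) - Lm i *v ((\<Sum>j\<in>{1..J}. v i j) - real J *\<^sub>R vstar)" .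
    have "ens_mean J (v (Suc i)) = (1 / real J) *\<^sub>R (\<Sum>j\<in>{1..J}. v i j) - Lm i *v ((1 / real J) *\<^sub>R (\<Sum>j\<in>{1..J}. v i j) - (1 / real J) *\<^sub>R (real J *\<^sub>R vstar))"
      unfolding ens_mean_def s by (simp add: mv_scale[symmetric] scaleR_diff_right)
    then show ?thesis using Jnz by (simp add: ens_mean_def)
  qed
  have estep: "e (Suc i) j = e i j - Lm i *v e i j" if "j \<in> {1..J}" for i j
    unfolding e_def meanstep EKI'[OF that] by (simp add: mv_diff algebra_simps)
  have Gmv: "G i *v x = (1 / (real J - 1)) *\<^sub>R (\<Sum>j\<in>{1..J}. (e i j \<bullet> x) *\<^sub>R e i j)" for i x
    unfolding G_def emp_cov_mv e_def ..
  have sdiv: "(\<Sum>j\<in>S. (f j / d) *\<^sub>R g j) = (1 / d) *\<^sub>R (\<Sum>j\<in>S. f j *\<^sub>R g j)"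
    for S and f :: "nat \<Rightarrow> real" and d and g :: "nat \<Rightarrow> real^'d"
    by (simp add: scaleR_sum_right)
  have Gstep: "G (Suc i) *v a l = (1 / (1 + \<delta> l i))\<^sup>2 *\<^sub>R (G i *v a l)" if l: "l \<in> ?N" for l i
  proof -
    let ?d = "1 + \<delta> l i"
    have nz: "?d \<noteq> 0" using delnn[OF l, of i] by simp
    have "G (Suc i) *v a l = (1 / (real J - 1)) *\<^sub>R (\<Sum>j\<in>{1..J}. (1 / ?d) *\<^sub>R ((e i j \<bullet> a l) *\<^sub>R e i j - Lm i *v ((e i j \<bullet> a l) *\<^sub>R e i j)))"
      unfolding Gmv
      by (rule arg_cong[where f="\<lambda>z. (1 / (real J - 1)) *\<^sub>R z"], rule sum.cong)
         (auto simp: estep cstep[OF l] inner_commute mv_scale scaleR_diff_right)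
    also have "\<dots> = (1 / ?d) *\<^sub>R (G i *v a l - Lm i *v (G i *v a l))"
      unfolding Gmv by (simp add: sdiv scaleR_sum_right[symmetric] sum_subtractf mv_sum mv_scale scaleR_diff_right mult.commute)
    also have "\<dots> = (1 / ?d) *\<^sub>R ((1 - \<delta> l i / ?d) *\<^sub>R (G i *v a l))"
      by (simp add: LGa[OF l] scaleR_diff_left)
    also have "\<dots> = (1 / ?d)\<^sup>2 *\<^sub>R (G i *v a l)"
      using nz by (simp add: field_simps power2_eq_square)
    finally show ?thesis .
  qed
  define p where "p l i = (\<Prod>k<i. 1 / (1 + \<delta> l k))" for l i
  have pSuc: "p l (Suc i) = p l i / (1 + \<delta> l i)" for l i by (simp add: p_def)
  have p0: "p l 0 = 1" for l by (simp add: p_def)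
  have Gp: "G i *v a l = (p l i)\<^sup>2 *\<^sub>R (G 0 *v a l)" if l: "l \<in> ?N" for l i
  proof (induction i)
    case 0 then show ?case by (simp add: p0)
  next
    case (Suc i) then show ?case
      by (simp add: Gstep[OF l] pSuc power_divide)
  qed
  have delp: "\<delta> l i = (p l i)\<^sup>2 * \<delta> l 0" if l: "l \<in> ?N" for l i
    using del[OF l, of i] del[OF l, of 0] Gp[OF l, of i] by simp
  have cp: "a l \<bullet> (v i j - vstar) = p l i * (a l \<bullet> (v 0 j - vstar))" if l: "l \<in> ?N" and j: "j \<in> {1..J}" for l i j
  proof (induction i)
    case 0 then show ?case by (simp add: p0)
  next
    case (Suc i)
    have "v (Suc i) j - vstar = (v i j - vstar) - Lm i *v (v i j - vstar)" using EKI'[OF j] by simp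
    then have "a l \<bullet> (v (Suc i) j - vstar) = a l \<bullet> ((v i j - vstar) - Lm i *v (v i j - vstar))"
      by (rule arg_cong)
    also have "\<dots> = a l \<bullet> (v i j - vstar) / (1 + \<delta> l i)" by (rule cstep[OF l])
    finally show ?case using Suc by (simp add: pSuc)
  qed
  have zdel: "\<delta> l i = 0" if l: "l \<in> {r+1..h}" for l i
    using delp[OF zN[OF l], of i] zero[OF l] by simp
  have zG: "G i *v a l = 0" if l: "l \<in> {r+1..h}" for l i
    using emp_cov_zero[OF J2, of "a l" "v i"] del[OF zN[OF l], of i] zdel[OF l] G_def by simp
  have zp: "p l i = 1" if l: "l \<in> {r+1..h}" for l i
    unfolding p_def using zdel[OF l] by simp
  have udef1: "u l = (1 / \<delta> l 0) *\<^sub>R (G 0 *v a l)" if l: "l \<in> {1..r}" for l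
    using u_def[of l] l by (simp add: G_def a_def matrix_vector_mul_assoc)
  have pdel: "\<delta> l 0 > 0" if l: "l \<in> {1..r}" for l using pos[OF l] by simp
  have pG: "G i *v a l = \<delta> l i *\<^sub>R u l" if l: "l \<in> {1..r}" for l i
    using Gp[OF rN[OF l], of i] delp[OF rN[OF l], of i] udef1[OF l] pdel[OF l] by simp
  have Lomega: "Lm i *v x = (\<Sum>k\<in>{1..r}. ((a k \<bullet> x) * (\<delta> k i / (1 + \<delta> k i))) *\<^sub>R u k)" for i x
  proof -
    have Hx: "H *v x = (\<Sum>k\<in>?N. (a k \<bullet> x) *\<^sub>R (\<Sigma> *v w k))"
      using expS[of "H *v x"] by (simp add: wH)
    have "Mi i *v (H *v x) = (\<Sum>k\<in>?N. ((a k \<bullet> x) / (1 + \<delta> k i)) *\<^sub>R w k)"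
      unfolding Hx by (simp add: mv_sum mv_scale) (rule sum.cong, auto simp: MiS)
    then have "Lm i *v x = (\<Sum>k\<in>?N. ((a k \<bullet> x) / (1 + \<delta> k i)) *\<^sub>R (G i *v a k))"
      by (simp add: Lmv mv_sum mv_scale a_def)
    also have "\<dots> = (\<Sum>k\<in>{1..h}. ((a k \<bullet> x) / (1 + \<delta> k i)) *\<^sub>R (G i *v a k))"
      by (rule sumN) (simp add: ak)
    also have "\<dots> = (\<Sum>k\<in>{1..r}. ((a k \<bullet> x) / (1 + \<delta> k i)) *\<^sub>R (G i *v a k))
                  + (\<Sum>k\<in>{r+1..h}. ((a k \<bullet> x) / (1 + \<delta> k i)) *\<^sub>R (G i *v a k))"
      unfolding hsplit(1) by (rule sum.union_disjoint) (use hsplit in auto)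
    also have "(\<Sum>k\<in>{r+1..h}. ((a k \<bullet> x) / (1 + \<delta> k i)) *\<^sub>R (G i *v a k)) = 0"
      by (simp add: zG)
    also have "(\<Sum>k\<in>{1..r}. ((a k \<bullet> x) / (1 + \<delta> k i)) *\<^sub>R (G i *v a k))
             = (\<Sum>k\<in>{1..r}. ((a k \<bullet> x) * (\<delta> k i / (1 + \<delta> k i))) *\<^sub>R u k)"
      by (rule sum.cong) (auto simp: pG)
    finally show ?thesis by simp
  qed
  have AA: "transpose H ** matrix_inv \<Sigma> ** H = A" unfolding A_def Si_def ..
  have Au: "A *v u l = a l" if l: "l \<in> {1..h}" for l
  proof (cases "l \<le> r")
    case True
    then have lr: "l \<in> {1..r}" using l by auto
    have "H *v u l = \<Sigma> *v w l"
      using udef1[OF lr] HGa[OF rN[OF lr], of 0] pdel[OF lr] by (simp add: mv_scale)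
    then show ?thesis by (simp add: Av SSi a_def)
  next
    case False
    then have "u l = pinv A *v (transpose H *v (Si *v (\<Sigma> *v w l)))"
      using u_def[of l] unfolding Hplus_def AA Si_def[symmetric] by (simp add: matrix_vector_mul_assoc[symmetric] A_def[symmetric])
    then have "u l = pinv A *v a l" by (simp add: SSi a_def)
    then show ?thesis using aX[OF l]
      by (simp add: matrix_vector_mul_assoc matrix_mul_assoc pinv_sym[OF symA])
  qed
  have uAx: "u l \<bullet> (A *v x) = a l \<bullet> x" if l: "l \<in> {1..h}" for l x
    using symdot[OF symA, of "u l" x] Au[OF l] by simp
  have Pv: "P *v x = (\<Sum>l\<in>{1..r}. (a l \<bullet> x) *\<^sub>R u l)" for x
  proof -
    have "P *v x = (\<Sum>l\<in>{1..r}. (u l \<bullet> (A *v x)) *\<^sub>R u l)"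
      unfolding P_def AA by (simp add: matrix_vector_mul_assoc[symmetric] sum_mv outer_mv)
    also have "\<dots> = (\<Sum>l\<in>{1..r}. (a l \<bullet> x) *\<^sub>R u l)"
      by (rule sum.cong) (use rh in \<open>auto simp: uAx\<close>)
    finally show ?thesis .
  qed
  have Qv: "Q *v x = (\<Sum>l\<in>{r+1..h}. (a l \<bullet> x) *\<^sub>R u l)" for x
  proof -
    have "Q *v x = (\<Sum>l\<in>{r+1..h}. (u l \<bullet> (A *v x)) *\<^sub>R u l)"
      unfolding Q_def AA by (simp add: matrix_vector_mul_assoc[symmetric] sum_mv outer_mv)
    also have "\<dots> = (\<Sum>l\<in>{r+1..h}. (a l \<bullet> x) *\<^sub>R u l)"
      by (rule sum.cong) (auto simp: uAx)
    finally show ?thesis .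
  qed
  have Qstep: "Q *v (x - Lm i *v x) = Q *v x" for x i
    unfolding Qv by (rule sum.cong) (auto simp: cstep[OF zN] zdel)
  have Pstep: "P *v (x - Lm i *v x) = (\<Sum>l\<in>{1..r}. ((a l \<bullet> x) / (1 + \<delta> l i)) *\<^sub>R u l)" for x i
    unfolding Pv by (rule sum.cong) (auto simp: cstep[OF rN])
  have Nstep: "(x - Lm i *v x) - P *v (x - Lm i *v x) - Q *v (x - Lm i *v x) = x - P *v x - Q *v x" for x i
  proof -
    have "Lm i *v x + P *v (x - Lm i *v x) = P *v x"
    proof -
      have "Lm i *v x + P *v (x - Lm i *v x) =
            (\<Sum>l\<in>{1..r}. ((a l \<bullet> x) * (\<delta> l i / (1 + \<delta> l i)) + (a l \<bullet> x) / (1 + \<delta> l i)) *\<^sub>R u l)"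
        by (simp only: Pstep) (simp add: Lomega sum.distrib scaleR_add_left)
      also have "\<dots> = P *v x" unfolding Pv
      proof (rule sum.cong)
        fix l assume l: "l \<in> {1..r}"
        have "1 + \<delta> l i \<noteq> 0" using delnn[OF rN[OF l], of i] by simp
        then have "(a l \<bullet> x) * (\<delta> l i / (1 + \<delta> l i)) + (a l \<bullet> x) / (1 + \<delta> l i) = a l \<bullet> x"
        proof -
          assume nz: "1 + \<delta> l i \<noteq> 0"
          show ?thesis using nz
            by (metis add_divide_distrib add.commute divide_self mult.right_neutral times_divide_eq_right distrib_left)
        qed
        then show "((a l \<bullet> x) * (\<delta> l i / (1 + \<delta> l i)) + (a l \<bullet> x) / (1 + \<delta> l i)) *\<^sub>R u l = (a l \<bullet> x) *\<^sub>R u l"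
          by simp
      qed simp
      finally show ?thesis .
    qed
    then show ?thesis using Qstep[of x i] by (simp add: algebra_simps)
  qed
  have Nf: "(mat 1 - P - Q) *v x = x - P *v x - Q *v x" for x by (simp add: diff_mv)
  have pb: "p l i > 0 \<and> (p l i)\<^sup>2 * (1 + 2 * \<delta> l 0 * real i) \<le> 1" if l: "l \<in> {1..r}" for l i
  proof (rule seq_bound[where p = "p l"])
    show "0 < \<delta> l 0" by (rule pdel[OF l])
    show "p l 0 = 1" by (rule p0)
    show "p l (Suc i) = p l i / (1 + \<delta> l 0 * (p l i)\<^sup>2)" for i
      using pSuc[of l i] delp[OF rN[OF l], of i] by (simp add: mult.commute)
  qed
  have pb2: "p l i \<le> (1 / sqrt (2 * \<delta> l 0)) * (1 / sqrt (real i))" if l: "l \<in> {1..r}" and i: "i \<ge> 1" for l i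
  proof -
    have d0: "\<delta> l 0 > 0" by (rule pdel[OF l])
    have pos: "2 * \<delta> l 0 * real i > 0" using d0 i by simp
    have "(p l i)\<^sup>2 * (2 * \<delta> l 0 * real i) \<le> 1" using pb[OF l, of i] d0
      by (smt (verit) mult_left_mono zero_le_power2)
    then have "(p l i)\<^sup>2 \<le> 1 / (2 * \<delta> l 0 * real i)" using pos by (simp add: field_simps)
    then have "p l i \<le> sqrt (1 / (2 * \<delta> l 0 * real i))" by (rule real_le_rsqrt)
    also have "\<dots> = (1 / sqrt (2 * \<delta> l 0)) * (1 / sqrt (real i))"
      by (simp add: real_sqrt_divide real_sqrt_mult)
    finally show ?thesis .
  qed
  show ?thesis
  proof (intro ballI conjI allI)
    fix j assume j: "j \<in> {1..J}"
    have om: "v (Suc i) j - vstar = (v i j - vstar) - Lm i *v (v i j - vstar)" for i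
      using EKI'[OF j] by simp
    show "Q *v (v i j - vstar) = Q *v (v 0 j - vstar)" for i
      by (induction i) (simp_all add: om Qstep)
    show "(mat 1 - P - Q) *v (v i j - vstar) = (mat 1 - P - Q) *v (v 0 j - vstar)" for i
    proof (induction i)
      case 0 then show ?case by simp
    next
      case (Suc i)
      then show ?case unfolding Nf om Nstep .
    qed
    define c0 where "c0 l = a l \<bullet> (v 0 j - vstar)" for l
    define C where "C = (\<Sum>l\<in>{1..r}. \<bar>c0 l\<bar> * norm (u l) * (1 / sqrt (2 * \<delta> l 0)))"
    have bound: "norm (P *v (v i j - vstar)) \<le> C * (1 / sqrt (real i))" if i: "i \<ge> 1" for i
    proof -
      have "P *v (v i j - vstar) = (\<Sum>l\<in>{1..r}. (p l i * c0 l) *\<^sub>R u l)"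
        unfolding Pv
      proof (rule sum.cong)
        fix l assume l: "l \<in> {1..r}"
        show "(a l \<bullet> (v i j - vstar)) *\<^sub>R u l = (p l i * c0 l) *\<^sub>R u l"
          unfolding c0_def using cp[OF rN[OF l] j, of i] by simp
      qed simp
      then have "norm (P *v (v i j - vstar)) \<le> (\<Sum>l\<in>{1..r}. norm ((p l i * c0 l) *\<^sub>R u l))"
        by (simp only: norm_sum)
      also have "\<dots> \<le> (\<Sum>l\<in>{1..r}. (\<bar>c0 l\<bar> * norm (u l) * (1 / sqrt (2 * \<delta> l 0))) * (1 / sqrt (real i)))"
      proof (rule sum_mono)
        fix l assume l: "l \<in> {1..r}"
        have pp: "p l i > 0" using pb[OF l] by simp
        have "norm ((p l i * c0 l) *\<^sub>R u l) = p l i * (\<bar>c0 l\<bar> * norm (u l))"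
          using pp by (simp add: abs_mult)
        also have "\<dots> \<le> ((1 / sqrt (2 * \<delta> l 0)) * (1 / sqrt (real i))) * (\<bar>c0 l\<bar> * norm (u l))"
          by (rule mult_right_mono[OF pb2[OF l i]]) simp
        finally show "norm ((p l i * c0 l) *\<^sub>R u l) \<le> (\<bar>c0 l\<bar> * norm (u l) * (1 / sqrt (2 * \<delta> l 0))) * (1 / sqrt (real i))"
          by (simp add: algebra_simps)
      qed
      also have "\<dots> = C * (1 / sqrt (real i))" unfolding C_def by (simp add: sum_distrib_right sum_divide_distrib)
      finally show ?thesis .
    qed
    show "(\<lambda>i. norm (P *v (v i j - vstar))) \<in> O(\<lambda>i. 1 / sqrt (real i))"
    proof (rule bigoI)
      show "\<forall>\<^sub>F i in at_top. norm (norm (P *v (v i j - vstar))) \<le> C * norm (1 / sqrt (real i))"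
        unfolding eventually_at_top_linorder
      proof (intro exI[of _ 1] allI impI)
        fix n :: nat assume "n \<ge> 1"
        then show "norm (norm (P *v (v n j - vstar))) \<le> C * norm (1 / sqrt (real n))"
          using bound[of n] by simp
      qed
    qed
  qed
qed

end
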